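(* Let $f(x)=\mathbb{E}[F(x,\omega)]$ be $\tau$-strongly convex with minimizer $x^*$. Suppose: for every $\omega$, $F(\cdot,\omega)$ is convex and $C^1$, and $f$ is $C^1$ with $L$-Lipschitz gradient; with $\bar w_{k,N_k}\triangleq\nabla f(x_k)-\frac1{N_k}\sum_{j=1}^{N_k}\nabla_xF(x_k,\omega_{j,k})$ there are $\nu_1,\nu_2>0$ such that $\mathbb{E}[\|\bar w_{k,N_k}\|^2\mid\mathcal{F}_k]\le\frac{\nu_1^2\|x_k\|^2+\nu_2^2}{N_k}$ and $\mathbb{E}[\bar w_{k,N_k}\mid\mathcal{F}_k]=0$ a.s. for all $k\ge0$; each $H_k$ is $\mathcal{F}_k$-measurable, symmetric positive definite with $\underline\lambda\mathbf{I}\preceq H_k\preceq\overline\lambda\mathbf{I}$ a.s. for constants $0<\underline\lambda\le\overline\lambda$. Let $x_{k+1}=x_k-\gamma_kH_k\frac1{N_k}\sum_{j=1}^{N_k}\nabla_xF(x_k,\omega_{j,k})$ with $\gamma_k=\frac{1}{L\overline\lambda}$ for all $k\ge0$, where $\{N_k\}_{k\ge0}$ is an increasing sequence of positive integers with $\sum_{k=0}^\infty\frac1{N_k}<\infty$ and $N_0>\frac{2\nu_1^2\overline\lambda}{\tau^2\underline\lambda}$. Then $\lim_{k\to\infty}f(x_k)=f(x^* )$ almost surely.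
   Context: $(\Omega,\mathcal{F},\mathbb{P})$ is a probability space and $F(x,\omega)$ abbreviates $F(x,\xi(\omega))$ for a random vector $\xi$; $\omega_{1,k},\dots,\omega_{N_k,k}$ are the samples at iteration $k$, $x_0$ is given, and $\mathcal{F}_k\triangleq\sigma\{x_0,\dots,x_{k-1}\}$. *)

theory Defs
  imports "HOL-Probability.Probability"
begin

definition strongly_convex_on :: "real \<Rightarrow> 'a::real_normed_vector set \<Rightarrow> ('a \<Rightarrow> real) \<Rightarrow> bool" where
  "strongly_convex_on \<tau> S f \<longleftrightarrow>
     (\<forall>x\<in>S. \<forall>y\<in>S. \<forall>t\<in>{0..1::real}.
        f ((1 - t) *\<^sub>R x + t *\<^sub>R y)
          \<le> (1 - t) * f x + t * f y - \<tau> / 2 * t * (1 - t) * (norm (x - y))\<^sup>2)"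

definition history :: "'w measure \<Rightarrow> (nat \<Rightarrow> 'w \<Rightarrow> 'a::topological_space) \<Rightarrow> nat \<Rightarrow> 'w measure" where
  "history M X k = sigma (space M) (\<Union>i\<in>{..k}. {X i -` A \<inter> space M | A. A \<in> sets borel})"

end

theory Submission
  imports Defs
begin



lemma sym_inner:
  fixes H :: "real^'n^'n"
  assumes "transpose H = H"
  shows "u \<bullet> (H *v w) = (H *v u) \<bullet> w"
proof -
  have "u \<bullet> (H *v w) = (u v* H) \<bullet> w" by (simp add: dot_lmul_matrix)
  also have "u v* H = transpose H *v u" by simp
  finally show ?thesis using assms by simp
qed

lemma quad_bound:
  fixes H :: "real^'n^'n" and v :: "real^'n"
  assumes sym: "transpose H = H" and pos: "\<And>u. 0 \<le> u \<bullet> (H *v u)"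
    and up: "\<And>u. u \<bullet> (H *v u) \<le> lamup * (norm u)^2" and lp: "lamup > 0"
  shows "(norm (H *v v))^2 \<le> lamup * (v \<bullet> (H *v v))"
proof -
  define z where "z = H *v v"
  define t where "t = 1 / lamup"
  have "0 \<le> (v - t *\<^sub>R z) \<bullet> (H *v (v - t *\<^sub>R z))" by (rule pos)
  also have "\<dots> = v \<bullet> (H *v v) - t * (v \<bullet> (H *v z)) - t * (z \<bullet> (H *v v)) + t^2 * (z \<bullet> (H *v z))"
    by (simp add: matrix_vector_mult_diff_distrib inner_diff_left inner_diff_right
        matrix_vector_mult_scaleR algebra_simps power2_eq_square)
  also have "v \<bullet> (H *v z) = z \<bullet> z" using sym_inner[OF sym, of v z] by (simp add: z_def)
  also have "z \<bullet> (H *v v) = z \<bullet> z" by (simp add: z_def)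
  finally have 1: "0 \<le> v \<bullet> (H *v v) - 2 * t * (z \<bullet> z) + t^2 * (z \<bullet> (H *v z))" by simp
  have "t^2 * (z \<bullet> (H *v z)) \<le> t^2 * (lamup * (norm z)^2)"
    by (intro mult_left_mono up) simp
  also have "\<dots> = t * (z \<bullet> z)" unfolding power2_norm_eq_inner t_def using lp by (simp add: power2_eq_square)
  finally have "0 \<le> v \<bullet> (H *v v) - t * (z \<bullet> z)" using 1 by simp
  hence "(z \<bullet> z) / lamup \<le> v \<bullet> (H *v v)" by (simp add: t_def)
  hence "z \<bullet> z \<le> lamup * (v \<bullet> (H *v v))" using lp by (simp add: divide_le_eq mult.commute)
  thus ?thesis by (simp add: z_def power2_norm_eq_inner)
qed

lemma descent:
  fixes f :: "real^'n \<Rightarrow> real"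
  assumes g: "\<And>y. GDERIV f y :> gradf y"
    and lip: "\<And>y z. norm (gradf y - gradf z) \<le> L * norm (y - z)"
  shows "f (x + d) \<le> f x + gradf x \<bullet> d + L / 2 * (norm d)^2"
proof -
  define \<phi> where "\<phi> t = f (x + t *\<^sub>R d) - t * (gradf x \<bullet> d) - L / 2 * t^2 * (norm d)^2" for t
  have der: "(\<phi> has_real_derivative (gradf (x + t *\<^sub>R d) \<bullet> d - gradf x \<bullet> d - L * t * (norm d)^2)) (at t)" for t
  proof -
    have a: "((\<lambda>t. x + t *\<^sub>R d) has_derivative (\<lambda>h. h *\<^sub>R d)) (at t)"
      by (auto intro!: derivative_eq_intros)
    have b: "(f has_derivative (\<lambda>h. h \<bullet> gradf (x + t *\<^sub>R d))) (at (x + t *\<^sub>R d))"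
      using g[of "x + t *\<^sub>R d"] by (simp add: gderiv_def)
    have c: "((\<lambda>t. f (x + t *\<^sub>R d)) has_derivative (\<lambda>h. (h *\<^sub>R d) \<bullet> gradf (x + t *\<^sub>R d))) (at t)"
      using has_derivative_compose[OF a b] by (simp add: o_def)
    have c': "((\<lambda>t. f (x + t *\<^sub>R d)) has_real_derivative (gradf (x + t *\<^sub>R d) \<bullet> d)) (at t)"
    proof -
      have "(\<lambda>h. (h *\<^sub>R d) \<bullet> gradf (x + t *\<^sub>R d)) = (*) (gradf (x + t *\<^sub>R d) \<bullet> d)"
        by (auto simp: fun_eq_iff inner_commute)
      thus ?thesis unfolding has_field_derivative_def using c by simp
    qed
    show ?thesis unfolding \<phi>_def
      by (rule derivative_eq_intros c' refl | simp add: power2_eq_square algebra_simps)+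
  qed
  have "\<phi> 1 \<le> \<phi> 0"
  proof (rule DERIV_nonpos_imp_nonincreasing[of 0 1])
    fix t :: real assume t: "0 \<le> t" "t \<le> 1"
    have "gradf (x + t *\<^sub>R d) \<bullet> d - gradf x \<bullet> d = (gradf (x + t *\<^sub>R d) - gradf x) \<bullet> d"
      by (simp add: inner_diff_left)
    also have "\<dots> \<le> norm (gradf (x + t *\<^sub>R d) - gradf x) * norm d" by (rule norm_cauchy_schwarz)
    also have "\<dots> \<le> (L * norm (t *\<^sub>R d)) * norm d"
      by (intro mult_right_mono) (use lip[of "x + t *\<^sub>R d" x] in auto)
    also have "\<dots> = L * t * (norm d)^2" using t by (simp add: power2_eq_square)
    finally show "\<exists>y. (\<phi> has_real_derivative y) (at t) \<and> y \<le> 0" using der[of t] by auto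
  qed simp
  thus ?thesis by (simp add: \<phi>_def)
qed



lemma tangent:
  fixes f :: "real^'n \<Rightarrow> real"
  assumes sc: "strongly_convex_on \<tau> UNIV f" and tp: "\<tau> > 0"
    and g: "\<And>y. GDERIV f y :> gradf y"
  shows "f x + gradf x \<bullet> (y - x) \<le> f y"
proof -
  define d where "d = y - x"
  define \<phi> where "\<phi> t = f (x + t *\<^sub>R d)" for t
  have cv: "convex_on UNIV \<phi>"
  proof (rule convex_onI)
    fix t a b :: real assume t: "0 < t" "t < 1"
    have "\<phi> ((1 - t) *\<^sub>R a + t *\<^sub>R b) = f ((1 - t) *\<^sub>R (x + a *\<^sub>R d) + t *\<^sub>R (x + b *\<^sub>R d))"
      unfolding \<phi>_def by (simp add: algebra_simps)
    also have "\<dots> \<le> (1 - t) * \<phi> a + t * \<phi> b - \<tau> / 2 * t * (1 - t) * (norm ((x + a *\<^sub>R d) - (x + b *\<^sub>R d)))\<^sup>2"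
    proof -
      have h: "\<forall>x\<in>UNIV. \<forall>y\<in>UNIV. \<forall>t\<in>{0..1::real}. f ((1 - t) *\<^sub>R x + t *\<^sub>R y)
          \<le> (1 - t) * f x + t * f y - \<tau> / 2 * t * (1 - t) * (norm (x - y))\<^sup>2"
        using sc unfolding strongly_convex_on_def .
      show ?thesis unfolding \<phi>_def using h[rule_format, of "x + a *\<^sub>R d" "x + b *\<^sub>R d" t] t by simp
    qed
    also have "\<dots> \<le> (1 - t) * \<phi> a + t * \<phi> b"
      using t tp by simp
    finally show "\<phi> ((1 - t) *\<^sub>R a + t *\<^sub>R b) \<le> (1 - t) * \<phi> a + t * \<phi> b" .
  qed simp
  have a: "((\<lambda>t. x + t *\<^sub>R d) has_derivative (\<lambda>h. h *\<^sub>R d)) (at 0)"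
    by (auto intro!: derivative_eq_intros)
  have b: "(f has_derivative (\<lambda>h. h \<bullet> gradf (x + 0 *\<^sub>R d))) (at (x + 0 *\<^sub>R d))"
    using g[of "x + 0 *\<^sub>R d"] by (simp add: gderiv_def)
  have c: "((\<lambda>t. f (x + t *\<^sub>R d)) has_derivative (\<lambda>h. (h *\<^sub>R d) \<bullet> gradf (x + 0 *\<^sub>R d))) (at 0)"
    using has_derivative_compose[OF a b] by (simp add: o_def)
  have "(\<lambda>h. (h *\<^sub>R d) \<bullet> gradf (x + 0 *\<^sub>R d)) = (*) (gradf x \<bullet> d)"
    by (auto simp: fun_eq_iff inner_commute)
  hence "(\<phi> has_real_derivative (gradf x \<bullet> d)) (at 0 within UNIV)"
    unfolding has_field_derivative_def \<phi>_def using c by simp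
  from convex_on_imp_above_tangent[OF cv _ _ _ this, of 1]
  have "\<phi> 1 - \<phi> 0 \<ge> gradf x \<bullet> d" by simp
  thus ?thesis by (simp add: \<phi>_def d_def)
qed

lemma growth:
  fixes f :: "real^'n \<Rightarrow> real"
  assumes sc: "strongly_convex_on \<tau> UNIV f" and mn: "\<And>y. f xs \<le> f y"
  shows "\<tau> / 4 * (norm (x - xs))^2 \<le> f x - f xs"
proof -
  have "f ((1 - 1/2) *\<^sub>R x + (1/2) *\<^sub>R xs) \<le> (1 - 1/2) * f x + 1/2 * f xs - \<tau> / 2 * (1/2) * (1 - 1/2) * (norm (x - xs))\<^sup>2"
    using sc unfolding strongly_convex_on_def by (elim ballE[of _ _ x] ballE[of _ _ xs] ballE[of _ _ "1/2"]) auto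
  moreover have "f xs \<le> f ((1 - 1/2) *\<^sub>R x + (1/2) *\<^sub>R xs)" by (rule mn)
  ultimately show ?thesis by simp
qed

lemma PL:
  fixes f :: "real^'n \<Rightarrow> real"
  assumes sc: "strongly_convex_on \<tau> UNIV f" and tp: "\<tau> > 0" and mn: "\<And>y. f xs \<le> f y"
    and g: "\<And>y. GDERIV f y :> gradf y"
  shows "f x - f xs \<le> 4 / \<tau> * (norm (gradf x))^2"
proof -
  define Y where "Y = f x - f xs"
  have Y0: "Y \<ge> 0" using mn by (simp add: Y_def)
  have "Y \<le> gradf x \<bullet> (x - xs)" using tangent[OF sc tp g, of x xs] by (simp add: Y_def inner_diff_right)
  also have "\<dots> \<le> norm (gradf x) * norm (x - xs)" by (rule norm_cauchy_schwarz)
  finally have 1: "Y \<le> norm (gradf x) * norm (x - xs)" .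
  have 2: "(norm (x - xs))^2 \<le> 4 / \<tau> * Y" using growth[OF sc mn, of x] tp
    by (simp add: Y_def field_simps)
  show ?thesis
  proof (cases "Y = 0")
    case True thus ?thesis using tp by (simp add: Y_def)
  next
    case False
    hence Yp: "Y > 0" using Y0 by simp
    have "Y^2 \<le> (norm (gradf x) * norm (x - xs))^2" using 1 Y0 by (simp add: power_mono)
    also have "\<dots> = (norm (gradf x))^2 * (norm (x - xs))^2" by (simp add: power_mult_distrib)
    also have "\<dots> \<le> (norm (gradf x))^2 * (4 / \<tau> * Y)" by (intro mult_left_mono 2) simp
    finally have "Y * Y \<le> (4 / \<tau> * (norm (gradf x))^2) * Y" by (simp add: power2_eq_square algebra_simps)
    hence "Y \<le> 4 / \<tau> * (norm (gradf x))^2" using Yp by (rule mult_right_le_imp_le)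
    thus ?thesis by (simp add: Y_def)
  qed
qed



lemma step_ineq:
  fixes f :: "real^'n \<Rightarrow> real" and H :: "real^'n^'n"
  assumes g: "\<And>y. GDERIV f y :> gradf y"
    and lip: "\<And>y z. norm (gradf y - gradf z) \<le> L * norm (y - z)"
    and Lp: "L > 0" and lp: "0 < lamlo" "lamlo \<le> lamup"
    and sym: "transpose H = H"
    and bnd: "\<forall>v. lamlo * (norm v)\<^sup>2 \<le> v \<bullet> (H *v v) \<and> v \<bullet> (H *v v) \<le> lamup * (norm v)\<^sup>2"
  shows "f (x - (1 / (L * lamup)) *\<^sub>R (H *v gg)) + lamlo / (2 * L * lamup) * (norm (gradf x))^2
     \<le> f x + 1 / (2 * L) * (norm (gradf x - gg))^2"
proof -
  define \<gamma> where "\<gamma> = 1 / (L * lamup)"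
  define v where "v = gradf x"
  define w where "w = gradf x - gg"
  have gg: "gg = v - w" by (simp add: v_def w_def)
  have up: "lamup > 0" using lp by simp
  have gp: "\<gamma> > 0" using Lp up by (simp add: \<gamma>_def)
  have pos: "0 \<le> u \<bullet> (H *v u)" for u
    using bnd lp by (meson order_trans mult_nonneg_nonneg less_imp_le zero_le_power2)
  have "f (x + (- \<gamma> *\<^sub>R (H *v gg))) \<le> f x + gradf x \<bullet> (- \<gamma> *\<^sub>R (H *v gg)) + L / 2 * (norm (- \<gamma> *\<^sub>R (H *v gg)))^2"
    by (rule descent[OF g lip])
  also have "\<dots> = f x - \<gamma> * (v \<bullet> (H *v gg)) + L / 2 * \<gamma>^2 * (norm (H *v gg))^2"
    using gp by (simp add: v_def power_mult_distrib)
  also have "\<dots> \<le> f x - \<gamma> * (v \<bullet> (H *v gg)) + L / 2 * \<gamma>^2 * (lamup * (gg \<bullet> (H *v gg)))"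
    using quad_bound[OF sym pos _ up, of gg] bnd Lp by (intro add_left_mono mult_left_mono) auto
  also have "L / 2 * \<gamma>^2 * (lamup * (gg \<bullet> (H *v gg))) = \<gamma> / 2 * (gg \<bullet> (H *v gg))"
    using Lp up by (simp add: \<gamma>_def power2_eq_square field_simps)
  also have "gg \<bullet> (H *v gg) = v \<bullet> (H *v v) - 2 * (v \<bullet> (H *v w)) + w \<bullet> (H *v w)"
    using sym_inner[OF sym, of w v] sym_inner[OF sym, of v w]
    by (simp add: gg matrix_vector_mult_diff_distrib inner_diff_left inner_diff_right inner_commute)
  also have "v \<bullet> (H *v gg) = v \<bullet> (H *v v) - v \<bullet> (H *v w)"
    by (simp add: gg matrix_vector_mult_diff_distrib inner_diff_right)
  finally have 1: "f (x - \<gamma> *\<^sub>R (H *v gg)) \<le> f x - \<gamma> / 2 * (v \<bullet> (H *v v)) + \<gamma> / 2 * (w \<bullet> (H *v w))"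
    by (simp add: algebra_simps)
  have 2: "\<gamma> / 2 * (lamlo * (norm v)^2) \<le> \<gamma> / 2 * (v \<bullet> (H *v v))"
    using bnd gp by (intro mult_left_mono) auto
  have 3: "\<gamma> / 2 * (w \<bullet> (H *v w)) \<le> \<gamma> / 2 * (lamup * (norm w)^2)"
    using bnd gp by (intro mult_left_mono) auto
  have e1: "\<gamma> / 2 * (lamlo * (norm v)^2) = lamlo / (2 * L * lamup) * (norm v)^2"
    by (simp add: \<gamma>_def)
  have e2: "\<gamma> / 2 * (lamup * (norm w)^2) = 1 / (2 * L) * (norm w)^2"
    using up by (simp add: \<gamma>_def)
  show ?thesis using 1 2 3 e1 e2 by (simp add: \<gamma>_def v_def w_def)
qed


lemma history_subalg:
  fixes x :: "nat \<Rightarrow> 'w \<Rightarrow> 'a::topological_space"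
  assumes "\<And>k. x k \<in> borel_measurable M"
  shows "subalgebra M (history M x k)"
proof -
  have gen: "(\<Union>i\<in>{..k}. {x i -` A \<inter> space M | A. A \<in> sets borel}) \<subseteq> sets M"
    using assms measurable_sets by blast
  hence "(\<Union>i\<in>{..k}. {x i -` A \<inter> space M | A. A \<in> sets borel}) \<subseteq> Pow (space M)"
    using sets.sets_into_space by blast
  moreover have "sigma_sets (space M) (\<Union>i\<in>{..k}. {x i -` A \<inter> space M | A. A \<in> sets borel}) \<subseteq> sets M"
    using sets.sigma_sets_subset[OF gen] .
  ultimately show ?thesis unfolding subalgebra_def history_def
    by (simp only: sets_measure_of_conv space_measure_of_conv if_True)
qed


lemma vec_meas:
  fixes g :: "'w \<Rightarrow> real^'n"
  assumes "\<And>i. (\<lambda>\<omega>. g \<omega> $ i) \<in> borel_measurable M"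
  shows "g \<in> borel_measurable M"
proof (rule borel_measurable_euclidean_space[THEN iffD2], rule ballI)
  fix b :: "real^'n" assume "b \<in> Basis"
  then obtain i and u :: real where "u \<in> Basis" "b = axis i u" unfolding Basis_vec_def by blast
  hence "b = axis i 1" by simp
  have "(\<lambda>x. g x \<bullet> axis i 1) = (\<lambda>x. g x $ i)" by (simp add: inner_axis)
  thus "(\<lambda>x. g x \<bullet> b) \<in> borel_measurable M" using assms[of i] \<open>b = axis i 1\<close> by simp
qed

lemma sq_tri: "(norm (a::real^'n))^2 \<le> 2 * (norm (a - b))^2 + 2 * (norm b)^2"
proof -
  have "norm a \<le> norm (a - b) + norm b" using norm_triangle_ineq[of "a - b" b] by simp
  hence "(norm a)^2 \<le> (norm (a - b) + norm b)^2" by (simp add: power_mono)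
  also have "\<dots> \<le> 2 * (norm (a - b))^2 + 2 * (norm b)^2"
    using zero_le_power2[of "norm (a - b) - norm b"] unfolding power2_eq_square by (simp add: algebra_simps)
  finally show ?thesis .
qed




theorem mainTheorem3:
  fixes M :: "'w measure" and S :: "'b measure"
    and F :: "real^'n \<Rightarrow> 'b \<Rightarrow> real" and gradF :: "real^'n \<Rightarrow> 'b \<Rightarrow> real^'n"
    and f :: "real^'n \<Rightarrow> real" and gradf :: "real^'n \<Rightarrow> real^'n"
    and \<xi> :: "'w \<Rightarrow> 'b" and smp :: "nat \<Rightarrow> nat \<Rightarrow> 'w \<Rightarrow> 'b"
    and x :: "nat \<Rightarrow> 'w \<Rightarrow> real^'n" and x0 xstar :: "real^'n"
    and H :: "nat \<Rightarrow> 'w \<Rightarrow> real^'n^'n"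
    and N :: "nat \<Rightarrow> nat"
    and \<tau> L \<nu>1 \<nu>2 lamlo lamup :: real
  assumes prob: "prob_space M"
    and xi_rv: "\<xi> \<in> measurable M S"
    and smp_rv: "\<And>k j. smp k j \<in> measurable M S"
    and smp_distr: "\<And>k j. distr M S (smp k j) = distr M S \<xi>"
    and F_int: "\<And>y. integrable M (\<lambda>\<omega>. F y (\<xi> \<omega>))"
    and f_def: "\<And>y. f y = integral\<^sup>L M (\<lambda>\<omega>. F y (\<xi> \<omega>))"
    and tau_pos: "\<tau> > 0"
    and f_strong: "strongly_convex_on \<tau> UNIV f"
    and xstar_min: "\<And>y. f xstar \<le> f y"
    and F_convex: "\<And>b. convex_on UNIV (\<lambda>y. F y b)"
    and F_grad: "\<And>b y. GDERIV (\<lambda>z. F z b) y :> gradF y b"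
    and F_C1: "\<And>b. continuous_on UNIV (\<lambda>y. gradF y b)"
    and f_grad: "\<And>y. GDERIV f y :> gradf y"
    and f_C1: "continuous_on UNIV gradf"
    and L_lip: "\<And>y z. norm (gradf y - gradf z) \<le> L * norm (y - z)"
    and L_pos: "L > 0"
    and nu_pos: "\<nu>1 > 0" "\<nu>2 > 0"
    and x_rv: "\<And>k. x k \<in> borel_measurable M"
    and x_init: "\<And>\<omega>. x 0 \<omega> = x0"
    and var_bound: "\<And>k. AE \<omega> in M.
          nn_cond_exp M (history M x k)
            (\<lambda>\<omega>. ennreal ((norm (gradf (x k \<omega>)
                 - (1 / real (N k)) *\<^sub>R (\<Sum>j\<in>{1..N k}. gradF (x k \<omega>) (smp k j \<omega>))))\<^sup>2)) \<omega>
          \<le> ennreal ((\<nu>1\<^sup>2 * (norm (x k \<omega>))\<^sup>2 + \<nu>2\<^sup>2) / real (N k))"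
    and mean_int: "\<And>k i. integrable M (\<lambda>\<omega>. (gradf (x k \<omega>)
                 - (1 / real (N k)) *\<^sub>R (\<Sum>j\<in>{1..N k}. gradF (x k \<omega>) (smp k j \<omega>))) $ i)"
    and mean_zero: "\<And>k i. AE \<omega> in M.
          real_cond_exp M (history M x k)
            (\<lambda>\<omega>. (gradf (x k \<omega>)
                 - (1 / real (N k)) *\<^sub>R (\<Sum>j\<in>{1..N k}. gradF (x k \<omega>) (smp k j \<omega>))) $ i) \<omega> = 0"
    and H_meas: "\<And>k. H k \<in> borel_measurable (history M x k)"
    and lam_pos: "0 < lamlo" "lamlo \<le> lamup"
    and H_sym: "\<And>k. AE \<omega> in M. transpose (H k \<omega>) = H k \<omega>"
    and H_bounds: "\<And>k. AE \<omega> in M. \<forall>v.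
          lamlo * (norm v)\<^sup>2 \<le> v \<bullet> (H k \<omega> *v v) \<and> v \<bullet> (H k \<omega> *v v) \<le> lamup * (norm v)\<^sup>2"
    and iter: "\<And>k \<omega>. x (Suc k) \<omega> = x k \<omega> - (1 / (L * lamup)) *\<^sub>R
          (H k \<omega> *v ((1 / real (N k)) *\<^sub>R (\<Sum>j\<in>{1..N k}. gradF (x k \<omega>) (smp k j \<omega>))))"
    and N_pos: "\<And>k. N k > 0"
    and N_incr: "incseq N"
    and N_summable: "summable (\<lambda>k. 1 / real (N k))"
    and N0: "real (N 0) > 2 * \<nu>1\<^sup>2 * lamup / (\<tau>\<^sup>2 * lamlo)"
  shows "AE \<omega> in M. (\<lambda>k. f (x k \<omega>)) \<longlonglongrightarrow> f xstar"
proof -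
  interpret P: prob_space M by (rule prob)
  define gs where "gs k \<omega> = (1 / real (N k)) *\<^sub>R (\<Sum>j\<in>{1..N k}. gradF (x k \<omega>) (smp k j \<omega>))" for k \<omega>
  define w where "w k \<omega> = gradf (x k \<omega>) - gs k \<omega>" for k \<omega>
  define Y where "Y k \<omega> = f (x k \<omega>) - f xstar" for k \<omega>
  define a where "a = lamlo / (2 * L * lamup)"
  define b where "b = 1 / (2 * L)"
  define c1 where "c1 = a * \<tau> / 4"
  define D where "D = \<nu>1^2 * (8 / \<tau>)"
  define R0 where "R0 = 2 * \<nu>1^2 * (norm xstar)^2 + \<nu>2^2"
  define e where "e k = (\<integral>\<^sup>+\<omega>. ennreal (Y k \<omega>) \<partial>M)" for k
  have up: "lamup > 0" using lam_pos by simp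
  have ap: "a > 0" using lam_pos up L_pos by (simp add: a_def)
  have c1p: "c1 > 0" using ap tau_pos by (simp add: c1_def)
  have bp: "b > 0" using L_pos by (simp add: b_def)
  have D0: "D \<ge> 0" using tau_pos by (simp add: D_def)
  have R00: "R0 \<ge> 0" by (simp add: R0_def)
  have bD: "b * D \<ge> 0" using bp D0 by simp
  have Npos: "real (N k) > 0" for k using N_pos[of k] by simp
  have Y0: "Y k \<omega> \<ge> 0" for k \<omega> using xstar_min by (simp add: Y_def)
  have fcont: "continuous_on UNIV f"
    using f_grad by (auto simp: gderiv_def intro!: continuous_at_imp_continuous_on has_derivative_continuous)
  have Ym[measurable]: "Y k \<in> borel_measurable M" for k
  proof -
    have "(\<lambda>\<omega>. f (x k \<omega>)) \<in> borel_measurable M"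
      using measurable_compose[OF x_rv borel_measurable_continuous_onI[OF fcont]] by (simp add: o_def)
    thus ?thesis unfolding Y_def by measurable
  qed
  have wm[measurable]: "w k \<in> borel_measurable M" for k
    by (rule vec_meas) (use mean_int[THEN borel_measurable_integrable] in \<open>simp add: w_def gs_def\<close>)
  have pw: "AE \<omega> in M. Y (Suc k) \<omega> + c1 * Y k \<omega> \<le> Y k \<omega> + b * (norm (w k \<omega>))^2" for k
    using H_sym[of k] H_bounds[of k]
  proof eventually_elim
    case (elim \<omega>)
    have st: "f (x k \<omega> - (1 / (L * lamup)) *\<^sub>R (H k \<omega> *v gs k \<omega>)) + lamlo / (2 * L * lamup) * (norm (gradf (x k \<omega>)))^2
     \<le> f (x k \<omega>) + 1 / (2 * L) * (norm (gradf (x k \<omega>) - gs k \<omega>))^2"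
      by (rule step_ineq[OF f_grad L_lip L_pos lam_pos elim(1) elim(2)])
    have xs: "x (Suc k) \<omega> = x k \<omega> - (1 / (L * lamup)) *\<^sub>R (H k \<omega> *v gs k \<omega>)"
      using iter by (simp add: gs_def)
    have pl: "Y k \<omega> \<le> 4 / \<tau> * (norm (gradf (x k \<omega>)))^2"
      using PL[OF f_strong tau_pos xstar_min f_grad] by (simp add: Y_def)
    have "c1 * Y k \<omega> \<le> c1 * (4 / \<tau> * (norm (gradf (x k \<omega>)))^2)"
      using pl c1p by (intro mult_left_mono) auto
    also have "\<dots> = a * (norm (gradf (x k \<omega>)))^2" using tau_pos by (simp add: c1_def)
    finally have "c1 * Y k \<omega> \<le> a * (norm (gradf (x k \<omega>)))^2" .
    then show ?case using st xs by (simp add: Y_def w_def a_def b_def)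
  qed
  have bound: "(\<nu>1\<^sup>2 * (norm (x k \<omega>))\<^sup>2 + \<nu>2\<^sup>2) / real (N k) \<le> D / real (N k) * Y k \<omega> + R0 / real (N k)" for k \<omega>
  proof -
    have g: "\<tau> / 4 * (norm (x k \<omega> - xstar))^2 \<le> Y k \<omega>"
      using growth[OF f_strong xstar_min] by (simp add: Y_def)
    have "(norm (x k \<omega> - xstar))^2 \<le> 4 / \<tau> * Y k \<omega>" using g tau_pos by (simp add: field_simps)
    hence "(norm (x k \<omega>))^2 \<le> 8 / \<tau> * Y k \<omega> + 2 * (norm xstar)^2"
      using sq_tri[of "x k \<omega>" xstar] by simp
    hence "\<nu>1\<^sup>2 * (norm (x k \<omega>))\<^sup>2 \<le> \<nu>1\<^sup>2 * (8 / \<tau> * Y k \<omega> + 2 * (norm xstar)^2)"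
      by (simp add: mult_left_mono)
    hence "\<nu>1\<^sup>2 * (norm (x k \<omega>))\<^sup>2 + \<nu>2\<^sup>2 \<le> D * Y k \<omega> + R0"
      by (simp add: D_def R0_def algebra_simps)
    hence "(\<nu>1\<^sup>2 * (norm (x k \<omega>))\<^sup>2 + \<nu>2\<^sup>2) / real (N k) \<le> (D * Y k \<omega> + R0) / real (N k)"
      using Npos[of k] by (simp add: divide_right_mono)
    thus ?thesis by (simp add: add_divide_distrib)
  qed
  have Wint: "(\<integral>\<^sup>+\<omega>. ennreal ((norm (w k \<omega>))^2) \<partial>M) \<le> ennreal (D / real (N k)) * e k + ennreal (R0 / real (N k))" for k
  proof -
    have sub: "subalgebra M (history M x k)" by (rule history_subalg[OF x_rv])
    have "finite_measure_subalgebra M (history M x k)"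
      unfolding finite_measure_subalgebra_def finite_measure_subalgebra_axioms_def
      using P.finite_measure_axioms sub by simp
    then interpret S: sigma_finite_subalgebra M "history M x k"
      by (rule finite_measure_subalgebra_is_sigma_finite)
    have "(\<integral>\<^sup>+\<omega>. ennreal ((norm (w k \<omega>))^2) \<partial>M)
        = (\<integral>\<^sup>+\<omega>. nn_cond_exp M (history M x k) (\<lambda>\<omega>. ennreal ((norm (w k \<omega>))^2)) \<omega> \<partial>M)"
      using S.nn_cond_exp_intg[of "\<lambda>_. 1" "\<lambda>\<omega>. ennreal ((norm (w k \<omega>))^2)"] by simp
    also have "\<dots> \<le> (\<integral>\<^sup>+\<omega>. ennreal ((\<nu>1\<^sup>2 * (norm (x k \<omega>))\<^sup>2 + \<nu>2\<^sup>2) / real (N k)) \<partial>M)"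
      by (rule nn_integral_mono_AE) (use var_bound[of k] in \<open>simp add: w_def gs_def\<close>)
    also have "\<dots> \<le> (\<integral>\<^sup>+\<omega>. ennreal (D / real (N k)) * ennreal (Y k \<omega>) + ennreal (R0 / real (N k)) \<partial>M)"
    proof (rule nn_integral_mono)
      fix \<omega>
      have "ennreal ((\<nu>1\<^sup>2 * (norm (x k \<omega>))\<^sup>2 + \<nu>2\<^sup>2) / real (N k)) \<le> ennreal (D / real (N k) * Y k \<omega> + R0 / real (N k))"
        by (rule ennreal_leI[OF bound])
      also have "\<dots> = ennreal (D / real (N k) * Y k \<omega>) + ennreal (R0 / real (N k))"
        using D0 R00 Npos[of k] Y0[of k \<omega>] by (intro ennreal_plus) auto
      also have "\<dots> = ennreal (D / real (N k)) * ennreal (Y k \<omega>) + ennreal (R0 / real (N k))"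
        using D0 R00 Npos[of k] Y0[of k \<omega>] by (subst ennreal_mult) auto
      finally show "ennreal ((\<nu>1\<^sup>2 * (norm (x k \<omega>))\<^sup>2 + \<nu>2\<^sup>2) / real (N k)) \<le> \<dots>" .
    qed
    also have "\<dots> = ennreal (D / real (N k)) * e k + ennreal (R0 / real (N k))"
      by (simp add: nn_integral_add nn_integral_cmult e_def P.emeasure_space_1)
    finally show ?thesis .
  qed
  have rec: "e (Suc k) + ennreal c1 * e k \<le> e k + ennreal b * (ennreal (D / real (N k)) * e k + ennreal (R0 / real (N k)))" for k
  proof -
    have "e (Suc k) + ennreal c1 * e k = (\<integral>\<^sup>+\<omega>. ennreal (Y (Suc k) \<omega>) + ennreal c1 * ennreal (Y k \<omega>) \<partial>M)"
      by (simp add: nn_integral_add nn_integral_cmult e_def)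
    also have "\<dots> \<le> (\<integral>\<^sup>+\<omega>. ennreal (Y k \<omega>) + ennreal b * ennreal ((norm (w k \<omega>))^2) \<partial>M)"
    proof (rule nn_integral_mono_AE)
      show "AE \<omega> in M. ennreal (Y (Suc k) \<omega>) + ennreal c1 * ennreal (Y k \<omega>) \<le> ennreal (Y k \<omega>) + ennreal b * ennreal ((norm (w k \<omega>))^2)"
        using pw[of k]
      proof eventually_elim
        case (elim \<omega>)
        have "ennreal (Y (Suc k) \<omega>) + ennreal c1 * ennreal (Y k \<omega>) = ennreal (Y (Suc k) \<omega> + c1 * Y k \<omega>)"
          using Y0 c1p by (simp add: ennreal_plus ennreal_mult)
        also have "\<dots> \<le> ennreal (Y k \<omega> + b * (norm (w k \<omega>))^2)" by (rule ennreal_leI[OF elim])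
        also have "\<dots> = ennreal (Y k \<omega>) + ennreal b * ennreal ((norm (w k \<omega>))^2)"
          using Y0 bp by (simp add: ennreal_plus ennreal_mult)
        finally show ?case .
      qed
    qed
    also have "\<dots> = e k + ennreal b * (\<integral>\<^sup>+\<omega>. ennreal ((norm (w k \<omega>))^2) \<partial>M)"
      by (simp add: nn_integral_add nn_integral_cmult e_def)
    also have "\<dots> \<le> e k + ennreal b * (ennreal (D / real (N k)) * e k + ennreal (R0 / real (N k)))"
      by (intro add_left_mono mult_left_mono Wint) simp
    finally show ?thesis .
  qed
  have fin: "e k < \<infinity>" for k
  proof (induction k)
    case 0
    show ?case by (simp add: e_def Y_def x_init P.emeasure_space_1)
  next
    case (Suc k)
    have "e (Suc k) \<le> e (Suc k) + ennreal c1 * e k" by simp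
    also have "\<dots> \<le> e k + ennreal b * (ennreal (D / real (N k)) * e k + ennreal (R0 / real (N k)))"
      by (rule rec)
    also have "\<dots> < \<infinity>" using Suc by (simp add: ennreal_mult_less_top)
    finally show ?case .
  qed
  define E where "E k = enn2real (e k)" for k
  have eE: "e k = ennreal (E k)" for k using fin[of k] by (simp add: E_def ennreal_enn2real less_top)
  have E0: "E k \<ge> 0" for k by (simp add: E_def)
  have recE: "E (Suc k) + c1 * E k \<le> E k + b * (D / real (N k) * E k + R0 / real (N k))" for k
  proof -
    have "ennreal (E (Suc k) + c1 * E k) = e (Suc k) + ennreal c1 * e k"
      using E0 c1p by (simp add: eE ennreal_plus ennreal_mult)
    also have "\<dots> \<le> e k + ennreal b * (ennreal (D / real (N k)) * e k + ennreal (R0 / real (N k)))"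
      by (rule rec)
    also have "\<dots> = ennreal (E k) + ennreal b * (ennreal (D / real (N k) * E k) + ennreal (R0 / real (N k)))"
      using E0 bp D0 bD R00 Npos[of k] by (simp only: eE ennreal_mult[symmetric] divide_nonneg_pos of_nat_0_le_iff)
    also have "\<dots> = ennreal (E k) + ennreal b * ennreal (D / real (N k) * E k + R0 / real (N k))"
      using E0 bp D0 bD R00 Npos[of k] by (subst ennreal_plus) auto
    also have "\<dots> = ennreal (E k) + ennreal (b * (D / real (N k) * E k + R0 / real (N k)))"
      using E0 bp D0 bD R00 Npos[of k] by (subst ennreal_mult) auto
    also have "\<dots> = ennreal (E k + b * (D / real (N k) * E k + R0 / real (N k)))"
      using E0 bp D0 bD R00 Npos[of k] by (subst ennreal_plus) auto
    finally show ?thesis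
      using E0 bp D0 bD R00 Npos[of k] by (subst (asm) ennreal_le_iff) auto
  qed
  have "(\<lambda>k. 1 / real (N k)) \<longlonglongrightarrow> 0" by (rule summable_LIMSEQ_zero[OF N_summable])
  moreover have "c1 / (2 * (b * D + 1)) > 0" using c1p bp D0 bD by (intro divide_pos_pos mult_pos_pos add_nonneg_pos[OF bD]) auto
  ultimately have "eventually (\<lambda>k. 1 / real (N k) < c1 / (2 * (b * D + 1))) sequentially"
    by (rule order_tendstoD)
  then obtain K where K: "\<And>k. k \<ge> K \<Longrightarrow> 1 / real (N k) < c1 / (2 * (b * D + 1))"
    by (auto simp: eventually_sequentially)
  have rec2: "E (Suc k) + c1 / 2 * E k \<le> E k + b * R0 * (1 / real (N k))" if "k \<ge> K" for k
  proof -
    have "(b * D + 1) * (1 / real (N k)) \<le> (b * D + 1) * (c1 / (2 * (b * D + 1)))"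
      using K[OF that] bD by (intro mult_left_mono) (auto intro: add_nonneg_nonneg)
    also have "\<dots> = c1 / 2"
    proof -
      have "b * D + 1 \<noteq> 0" using bD by linarith
      thus ?thesis by (simp add: field_simps)
    qed
    finally have "(b * D + 1) * (1 / real (N k)) \<le> c1 / 2" .
    moreover have "b * D * (1 / real (N k)) \<le> (b * D + 1) * (1 / real (N k))"
      by (intro mult_right_mono) auto
    ultimately have "b * D * (1 / real (N k)) \<le> c1 / 2" by linarith
    hence "b * D * (1 / real (N k)) * E k \<le> c1 / 2 * E k" using E0 by (intro mult_right_mono) auto
    moreover have "b * (D / real (N k) * E k + R0 / real (N k)) = b * D * (1 / real (N k)) * E k + b * R0 * (1 / real (N k))"
      by (simp add: algebra_simps)
    ultimately show ?thesis using recE[of k] by linarith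
  qed
  have ind: "c1 / 2 * (\<Sum>i<n. E (i + K)) + E (n + K) \<le> E K + b * R0 * (\<Sum>i<n. 1 / real (N (i + K)))" for n
  proof (induction n)
    case 0 show ?case by simp
  next
    case (Suc n)
    have "E (Suc (n + K)) + c1 / 2 * E (n + K) \<le> E (n + K) + b * R0 * (1 / real (N (n + K)))"
      by (rule rec2) simp
    with Suc show ?case by (simp add: algebra_simps)
  qed
  have sN: "summable (\<lambda>i. 1 / real (N (i + K)))" by (rule summable_iff_shift[where f="\<lambda>k. 1 / real (N k)", THEN iffD2, OF N_summable])
  have sE': "summable (\<lambda>i. E (i + K))"
  proof (rule summableI_nonneg_bounded)
    fix n
    have "(\<Sum>i<n. 1 / real (N (i + K))) \<le> (\<Sum>i. 1 / real (N (i + K)))"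
      by (rule sum_le_suminf[OF sN]) auto
    hence "b * R0 * (\<Sum>i<n. 1 / real (N (i + K))) \<le> b * R0 * (\<Sum>i. 1 / real (N (i + K)))"
      using bp R00 by (intro mult_left_mono) auto
    hence "c1 / 2 * (\<Sum>i<n. E (i + K)) \<le> E K + b * R0 * (\<Sum>i. 1 / real (N (i + K)))"
      using ind[of n] E0[of "n + K"] by linarith
    thus "(\<Sum>i<n. E (i + K)) \<le> 2 / c1 * (E K + b * R0 * (\<Sum>i. 1 / real (N (i + K))))"
      using c1p by (simp add: field_simps)
  qed (use E0 in auto)
  hence sE: "summable E" by (rule summable_iff_shift[where f=E and k=K, THEN iffD1])
  have "(\<integral>\<^sup>+\<omega>. (\<Sum>k. ennreal (Y k \<omega>)) \<partial>M) = (\<Sum>k. e k)"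
    unfolding e_def by (rule nn_integral_suminf) simp
  also have "\<dots> = (\<Sum>k. ennreal (E k))" by (simp add: eE)
  also have "\<dots> \<noteq> \<infinity>" using ennreal_suminf_neq_top[OF sE E0] by simp
  finally have "AE \<omega> in M. (\<Sum>k. ennreal (Y k \<omega>)) \<noteq> \<infinity>"
    by (intro nn_integral_PInf_AE) auto
  then show ?thesis
  proof (rule eventually_mono)
    fix \<omega> assume "(\<Sum>k. ennreal (Y k \<omega>)) \<noteq> \<infinity>"
    hence "summable (\<lambda>k. Y k \<omega>)" using Y0 by (intro summable_suminf_not_top) auto
    hence "(\<lambda>k. Y k \<omega>) \<longlonglongrightarrow> 0" by (rule summable_LIMSEQ_zero)
    thus "(\<lambda>k. f (x k \<omega>)) \<longlonglongrightarrow> f xstar" unfolding Y_def by (rule LIM_zero_cancel)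
  qed
qed


end
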